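(* Let $n\in\{1,2\}$ and let $\Gamma$, $\phi$, $c_1$, $\delta$, $U_r$, $\varrho$, $\widetilde{\mathcal T}_h$ and $D_h$ be as in the context. Denote by $r_0\in(0,1)$ the unique zero of the function $r\mapsto \arccos(r)-c_1 r$, set $c_2=\frac{\pi}{2}+c_1$ and $\widehat\varepsilon=\varepsilon\arccos(\frac{h}{\varepsilon})-c_1h$. Suppose that $\varepsilon=\gamma h$ for some $\gamma>\frac{1}{r_0}$ and that $c_2\varepsilon<\delta$. Then $\widehat\varepsilon>0$ and $$\Gamma\subset U_{\widehat\varepsilon}\subset D_h\subset U_{c_2\varepsilon}\subset U_\delta .$$ Furthermore there is a constant $C$, independent of $h$ and $\varepsilon$, such that $$\varrho(x)\le C\Bigl(\frac{h}{\varepsilon}\Bigr)^{2(q+1)}\qquad \text{for all } x\in D_h\setminus U_{\widehat\varepsilon}.$$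
   Context: $\Gamma\subset\mathbb R^{n+1}$ is a smooth, connected, compact, orientable hypersurface without boundary. $\Omega$ is a bounded polyhedral open neighbourhood of $\Gamma$ and $\phi:\overline\Omega\to\mathbb R$ is smooth with $\Gamma=\{x\in\Omega:\phi(x)=0\}$ and $c_0\le|\nabla\phi(x)|\le c_1$ for all $x\in\overline\Omega$, where $0<c_0\le c_1$. For $r>0$, $U_r:=\{x\in\Omega:|\phi(x)|<r\}$. The number $\delta>0$ is such that for every $p\in\Gamma$ the ODE $\gamma_p'(s)=\frac{A(p)\nabla\phi(\gamma_p(s))}{A(p)\nabla\phi(\gamma_p(s))\cdot\nabla\phi(\gamma_p(s))}$, $\gamma_p(0)=p$ (with $A(p)$ a given symmetric positive definite matrix field on $\Gamma$) has a unique solution on $(-\delta,\delta)$, so that $(p,s)\mapsto\gamma_p(s)$ is a bijection from $\Gamma\times(-\delta,\delta)$ onto $U_\delta$ (note $\phi(\gamma_p(s))=s$). Let $q\ge 0$ be an integer and let a quadrature rule on the reference simplex $\widehat T\subset\mathbb R^{n+1}$ be given, $\widehat Q(\widehat g)=|\widehat T|\sum_{i=1}^L\omega_i\widehat g(\widehat b_i)$ with $\omega_i>0$, $\sum_i\omega_i=1$, $\widehat b_i\in\widehat T$, exact for polynomials of degree $\le q$; on a simplex $T$ set $b_{i,T}=\Phi_T(\widehat b_i)$ where $\Phi_T$ is the affine map from $\widehat T$ onto $T$. Define $\sigma(r)=\cos^{2(q+1)}(r)$ for $|r|\le\frac\pi2$ and $\sigma(r)=0$ for $|r|>\frac\pi2$,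 and the phase field function $\varrho(x)=\sigma(\phi(x)/\varepsilon)$, $x\in\Omega$. $\mathcal T_h$ is a regular partition of $\overline\Omega$ into simplices $T$ with $h=\max_T\operatorname{diam}(T)$. For $h<\varepsilon$, $\widetilde{\mathcal T}_h:=\{T\in\mathcal T_h: |\phi(b_{i,T})|\le\varepsilon\arccos(h/\varepsilon)\text{ for all } i=1,\dots,L\}$ and $D_h:=\bigcup_{T\in\widetilde{\mathcal T}_h}T$. *)

theory Defs
  imports "HOL-Analysis.Analysis"
begin

inductive_set iter_partials :: "('a::euclidean_space \<Rightarrow> real) \<Rightarrow> ('a \<Rightarrow> real) set"
  for f :: "'a \<Rightarrow> real" where
  base: "f \<in> iter_partials f"
| step: "g \<in> iter_partials f \<Longrightarrow> i \<in> Basis \<Longrightarrow>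
         (\<lambda>x. frechet_derivative g (at x) i) \<in> iter_partials f"

definition smooth_on :: "'a::euclidean_space set \<Rightarrow> ('a \<Rightarrow> real) \<Rightarrow> bool" where
  "smooth_on S f \<longleftrightarrow> open S \<and>
     (\<forall>g \<in> iter_partials f. g differentiable_on S \<and> continuous_on S g)"

definition grad :: "('a::euclidean_space \<Rightarrow> real) \<Rightarrow> 'a \<Rightarrow> 'a" where
  "grad f x = (\<Sum>i\<in>Basis. frechet_derivative f (at x) i *\<^sub>R i)"

definition multi_indices :: "nat \<Rightarrow> ('a::euclidean_space \<Rightarrow> nat) set" where
  "multi_indices q = {k. (\<forall>i. i \<notin> Basis \<longrightarrow> k i = 0) \<and> sum k Basis \<le> q}"

definition poly_deg_le :: "nat \<Rightarrow> ('a::euclidean_space \<Rightarrow> real) \<Rightarrow> bool" where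
  "poly_deg_le q g \<longleftrightarrow> (\<exists>c :: ('a \<Rightarrow> nat) \<Rightarrow> real.
      g = (\<lambda>x. \<Sum>k\<in>multi_indices q. c k * (\<Prod>i\<in>Basis. (x \<bullet> i) ^ k i)))"

definition ref_simplex :: "'a::euclidean_space set" where
  "ref_simplex = convex hull (insert 0 Basis)"

definition quadrature_rule :: "nat \<Rightarrow> nat \<Rightarrow> (nat \<Rightarrow> real) \<Rightarrow> (nat \<Rightarrow> 'a::euclidean_space) \<Rightarrow> bool" where
  "quadrature_rule q L \<omega> bh \<longleftrightarrow>
     (\<forall>i\<in>{1..L}. \<omega> i > 0 \<and> bh i \<in> ref_simplex) \<and> (\<Sum>i=1..L. \<omega> i) = 1 \<and>
     (\<forall>g. poly_deg_le q g \<longrightarrow>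
        (g has_integral (measure lebesgue (ref_simplex :: 'a set) * (\<Sum>i=1..L. \<omega> i * g (bh i)))) ref_simplex)"

definition affine_map :: "('a::euclidean_space \<Rightarrow> 'a) \<Rightarrow> bool" where
  "affine_map F \<longleftrightarrow> (\<exists>f c. linear f \<and> F = (\<lambda>x. f x + c))"

definition regular_partition :: "'a::euclidean_space set set \<Rightarrow> 'a set \<Rightarrow> bool" where
  "regular_partition \<T> K \<longleftrightarrow> finite \<T> \<and> \<T> \<noteq> {} \<and>
     (\<forall>T\<in>\<T>. int DIM('a) simplex T) \<and> \<Union>\<T> = K \<and>
     (\<forall>T\<in>\<T>. \<forall>T'\<in>\<T>. T \<noteq> T' \<longrightarrow>
        interior T \<inter> interior T' = {} \<and>
        (T \<inter> T' = {} \<or> (T \<inter> T' face_of T \<and> T \<inter> T' face_of T')))"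

definition meshsize :: "'a::euclidean_space set set \<Rightarrow> real" where
  "meshsize \<T> = Max (diameter ` \<T>)"

definition sigma_pf :: "nat \<Rightarrow> real \<Rightarrow> real" where
  "sigma_pf q r = (if \<bar>r\<bar> \<le> pi / 2 then cos r ^ (2 * (q + 1)) else 0)"

definition U_nbhd :: "'a set \<Rightarrow> ('a \<Rightarrow> real) \<Rightarrow> real \<Rightarrow> 'a set" where
  "U_nbhd \<Omega> \<phi> r = {x\<in>\<Omega>. \<bar>\<phi> x\<bar> < r}"

definition active_elements ::
  "'a set set \<Rightarrow> ('a set \<Rightarrow> 'a \<Rightarrow> 'a) \<Rightarrow> nat \<Rightarrow> (nat \<Rightarrow> 'a) \<Rightarrow> ('a \<Rightarrow> real) \<Rightarrow> real \<Rightarrow> real \<Rightarrow> 'a set set" where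
  "active_elements \<T> \<Phi> L bh \<phi> \<epsilon> h =
     {T\<in>\<T>. \<forall>i\<in>{1..L}. \<bar>\<phi> (\<Phi> T (bh i))\<bar> \<le> \<epsilon> * arccos (h / \<epsilon>)}"

definition r0_of :: "real \<Rightarrow> real" where
  "r0_of c1 = (THE r. 0 < r \<and> r < 1 \<and> arccos r - c1 * r = 0)"

end

theory Submission
  imports Defs
begin



lemma r0_props:
  fixes c1 :: real assumes "0 < c1"
  shows "0 < r0_of c1 \<and> r0_of c1 < 1 \<and> arccos (r0_of c1) = c1 * r0_of c1"
proof -
  define f where "f = (\<lambda>r::real. arccos r - c1 * r)"
  have cont: "continuous_on {0..1} f" unfolding f_def
    by (intro continuous_intros) auto
  have f1: "f 1 \<le> 0" using assms unfolding f_def by simp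
  have f0: "0 \<le> f 0" unfolding f_def by simp
  have "\<exists>r. 0 \<le> r \<and> r \<le> 1 \<and> f r = 0"
    by (rule IVT2'[OF f1 f0 _ cont]) simp
  then obtain r where r: "0 \<le> r" "r \<le> 1" "f r = 0" by blast
  have "r \<noteq> 0" using r unfolding f_def by auto
  moreover have "r \<noteq> 1" using r assms unfolding f_def by auto
  ultimately have r': "0 < r" "r < 1" using r by auto
  have mono: "f y < f x" if "-1 \<le> x" "x < y" "y \<le> 1" for x y
  proof -
    have "arccos y < arccos x" using arccos_less_arccos[OF that] .
    moreover have "c1 * x < c1 * y" using that assms by simp
    ultimately show ?thesis unfolding f_def by linarith
  qed
  have uniq: "r' = r" if "0 < r'" "r' < 1" "f r' = 0" for r'
  proof (rule ccontr)
    assume "r' \<noteq> r"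
    then have "r' < r \<or> r < r'" by linarith
    then show False using mono[of r r'] mono[of r' r] that r' r by auto
  qed
  have "r0_of c1 = r"
    unfolding r0_of_def
  proof (rule the_equality)
    show "0 < r \<and> r < 1 \<and> arccos r - c1 * r = 0" using r' r(3) by (simp add: f_def)
    fix r'' assume "0 < r'' \<and> r'' < 1 \<and> arccos r'' - c1 * r'' = 0"
    then show "r'' = r" using uniq[of r''] by (simp add: f_def)
  qed
  then show ?thesis using r(3) r' by (simp add: f_def)
qed

lemma r0_less:
  fixes c1 t :: real assumes "0 < c1" "0 < t" "t < r0_of c1"
  shows "arccos t - c1 * t > 0"
proof -
  have r: "0 < r0_of c1 \<and> r0_of c1 < 1 \<and> arccos (r0_of c1) = c1 * r0_of c1"
    using r0_props[OF assms(1)] .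
  have "arccos (r0_of c1) < arccos t" using arccos_less_arccos[of t "r0_of c1"] r assms by auto
  moreover have "c1 * t < c1 * r0_of c1" using assms by auto
  ultimately show ?thesis using r by linarith
qed

lemma cos_bound:
  fixes c1 t u :: real assumes "0 < c1" "0 < t" "t \<le> 1" "arccos t - c1 * t > 0"
    "arccos t - c1 * t \<le> u" "u \<le> pi/2"
  shows "0 \<le> cos u" "cos u \<le> (1 + c1) * t"
proof -
  show "0 \<le> cos u" using assms cos_ge_zero[of u] by auto
  have "cos u \<le> cos (arccos t - c1 * t)"
    using assms by (subst cos_mono_le_eq) auto
  also have "\<dots> = t * cos (c1 * t) + sin (arccos t) * sin (c1 * t)"
    using assms by (simp add: cos_diff)
  also have "\<dots> \<le> t + c1 * t"
  proof -
    have "t * cos (c1 * t) \<le> t" using assms by (simp add: mult_left_le)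
    moreover have "sin (arccos t) * sin (c1 * t) \<le> 1 * (c1 * t)"
    proof (rule mult_mono)
      show "sin (arccos t) \<le> 1" by simp
      show "sin (c1 * t) \<le> c1 * t" using assms by (intro sin_x_le_x) auto
      show "(0::real) \<le> 1" by simp
      have "arccos t \<le> pi" using assms by (intro arccos_ubound) auto
      then show "0 \<le> sin (c1 * t)" using assms
        by (intro sin_ge_zero) auto
    qed
    ultimately show ?thesis by simp
  qed
  finally show "cos u \<le> (1 + c1) * t" by (simp add: algebra_simps)
qed




lemma lin_expand:
  fixes f :: "'a::euclidean_space \<Rightarrow> 'b::real_vector"
  assumes "linear f"
  shows "f v = (\<Sum>i\<in>Basis. (v \<bullet> i) *\<^sub>R f i)"
proof -
  have "f v = f (\<Sum>i\<in>Basis. (v \<bullet> i) *\<^sub>R i)" by (simp add: euclidean_representation)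
  also have "\<dots> = (\<Sum>i\<in>Basis. (v \<bullet> i) *\<^sub>R f i)"
    using assms by (simp add: linear_sum linear_scale)
  finally show ?thesis .
qed

lemma fd_grad:
  fixes f :: "'a::euclidean_space \<Rightarrow> real"
  assumes "f differentiable (at x)"
  shows "frechet_derivative f (at x) v = grad f x \<bullet> v"
proof -
  have "frechet_derivative f (at x) v = (\<Sum>i\<in>Basis. (v \<bullet> i) *\<^sub>R frechet_derivative f (at x) i)"
    using lin_expand[OF linear_frechet_derivative[OF assms]] .
  also have "\<dots> = grad f x \<bullet> v"
    unfolding grad_def by (simp add: inner_sum_right inner_commute mult.commute)
  finally show ?thesis .
qed

lemma has_deriv_grad:
  fixes f :: "'a::euclidean_space \<Rightarrow> real"
  assumes "f differentiable (at x)"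
  shows "(f has_derivative (\<lambda>v. grad f x \<bullet> v)) (at x)"
proof -
  have "(f has_derivative frechet_derivative f (at x)) (at x)"
    using assms frechet_derivative_works by blast
  moreover have "frechet_derivative f (at x) = (\<lambda>v. grad f x \<bullet> v)"
    using fd_grad[OF assms] by auto
  ultimately show ?thesis by simp
qed

lemma onorm_inner_le:
  fixes g :: "'a::euclidean_space"
  assumes "norm g \<le> B"
  shows "onorm (\<lambda>v. g \<bullet> v) \<le> B"
proof (rule onorm_le)
  fix v :: 'a
  have "norm (g \<bullet> v) \<le> norm g * norm v" using Cauchy_Schwarz_ineq2 by simp
  also have "\<dots> \<le> B * norm v" using assms by (simp add: mult_right_mono)
  finally show "norm (g \<bullet> v) \<le> B * norm v" .
qed

lemma lip_convex:
  fixes f :: "'a::euclidean_space \<Rightarrow> real"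
  assumes "convex T" "\<And>x. x \<in> T \<Longrightarrow> f differentiable (at x)"
    "\<And>x. x \<in> T \<Longrightarrow> norm (grad f x) \<le> B" "x \<in> T" "y \<in> T"
  shows "\<bar>f x - f y\<bar> \<le> B * norm (x - y)"
proof -
  have "norm (f x - f y) \<le> B * norm (x - y)"
  proof (rule differentiable_bound[OF assms(1) _ _ assms(4,5)])
    fix z assume "z \<in> T"
    then show "(f has_derivative (\<lambda>v. grad f z \<bullet> v)) (at z within T)"
      using has_deriv_grad assms(2) has_derivative_at_withinI by blast
    show "onorm (\<lambda>v. grad f z \<bullet> v) \<le> B" using assms(3)[OF \<open>z \<in> T\<close>] by (rule onorm_inner_le)
  qed
  then show ?thesis by simp
qed

lemma smooth_diff:
  assumes "smooth_on S f" "x \<in> S"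
  shows "f differentiable (at x)"
  using assms iter_partials.base unfolding smooth_on_def
  by (meson differentiable_on_eq_differentiable_at)

lemma smooth_partial:
  assumes "smooth_on S f" "g \<in> iter_partials f" "i \<in> Basis"
  shows "(\<lambda>x. frechet_derivative g (at x) i) \<in> iter_partials f"
  using assms iter_partials.step by blast

lemma smooth_member:
  assumes "smooth_on S f" "g \<in> iter_partials f"
  shows "continuous_on S g" "\<And>x. x \<in> S \<Longrightarrow> g differentiable (at x)"
  using assms unfolding smooth_on_def
  by (auto simp: differentiable_on_eq_differentiable_at)

lemma grad_cont:
  assumes "smooth_on S f"
  shows "continuous_on S (grad f)"
proof -
  have "continuous_on S (\<lambda>x. \<Sum>i\<in>Basis. frechet_derivative f (at x) i *\<^sub>R i)"
    by (intro continuous_intros smooth_member(1)[OF assms] smooth_partial[OF assms]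
        iter_partials.base)
  then show ?thesis unfolding grad_def[abs_def] .
qed




lemma gronwall_sq:
  fixes y1 y2 :: "real \<Rightarrow> 'a::euclidean_space" and f1 f2 :: "'a \<Rightarrow> 'a"
  assumes d1: "\<And>t. t \<in> {-\<delta><..<\<delta>} \<Longrightarrow> (y1 has_vector_derivative f1 (y1 t)) (at t)"
    and d2: "\<And>t. t \<in> {-\<delta><..<\<delta>} \<Longrightarrow> (y2 has_vector_derivative f2 (y2 t)) (at t)"
    and inK: "\<And>t. t \<in> {-\<delta><..<\<delta>} \<Longrightarrow> y1 t \<in> K \<and> y2 t \<in> K"
    and lip: "\<And>u w. u \<in> K \<Longrightarrow> w \<in> K \<Longrightarrow> norm (f1 u - f1 w) \<le> L * norm (u - w)"
    and L0: "0 \<le> L"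
    and eta: "\<And>u. u \<in> K \<Longrightarrow> norm (f1 u - f2 u) \<le> \<eta>"
    and s: "s \<in> {-\<delta><..<\<delta>}"
  shows "norm (y1 s - y2 s) ^ 2 \<le> (norm (y1 0 - y2 0) ^ 2 + \<eta>^2 * \<bar>s\<bar>) * exp ((2*L+1) * \<bar>s\<bar>)"
proof -
  define c where "c = 2*L+1"
  have c0: "0 \<le> c" using L0 unfolding c_def by simp
  define v where "v = (\<lambda>t. (y1 t - y2 t) \<bullet> (y1 t - y2 t))"
  define v' where "v' = (\<lambda>t. 2 * ((y1 t - y2 t) \<bullet> (f1 (y1 t) - f2 (y2 t))))"
  have vder: "(v has_real_derivative v' t) (at t)" if t: "t \<in> {-\<delta><..<\<delta>}" for t
  proof -
    have e: "((\<lambda>t. y1 t - y2 t) has_vector_derivative (f1 (y1 t) - f2 (y2 t))) (at t)"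
      using d1[OF t] d2[OF t] by (intro derivative_intros)
    have "((\<lambda>t. (y1 t - y2 t) \<bullet> (y1 t - y2 t)) has_derivative
       (\<lambda>h. (y1 t - y2 t) \<bullet> (h *\<^sub>R (f1 (y1 t) - f2 (y2 t))) + (h *\<^sub>R (f1 (y1 t) - f2 (y2 t))) \<bullet> (y1 t - y2 t))) (at t)"
      using e unfolding has_vector_derivative_def by (intro has_derivative_inner) auto
    moreover have "(\<lambda>h. (y1 t - y2 t) \<bullet> (h *\<^sub>R (f1 (y1 t) - f2 (y2 t))) + (h *\<^sub>R (f1 (y1 t) - f2 (y2 t))) \<bullet> (y1 t - y2 t))
      = (\<lambda>h. v' t * h)" unfolding v'_def by (auto simp: inner_commute algebra_simps)
    ultimately show ?thesis unfolding v_def has_field_derivative_def by simp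
  qed
  have vbound: "\<bar>v' t\<bar> \<le> c * v t + \<eta>^2" if t: "t \<in> {-\<delta><..<\<delta>}" for t
  proof -
    define e where "e = y1 t - y2 t"
    have "norm (f1 (y1 t) - f2 (y2 t)) \<le> norm (f1 (y1 t) - f1 (y2 t)) + norm (f1 (y2 t) - f2 (y2 t))"
      by (metis diff_add_cancel norm_triangle_ineq add_diff_eq diff_diff_eq2)
    also have "\<dots> \<le> L * norm e + \<eta>" using lip[of "y1 t" "y2 t"] eta[of "y2 t"] inK[OF t]
      unfolding e_def by auto
    finally have dn: "norm (f1 (y1 t) - f2 (y2 t)) \<le> L * norm e + \<eta>" .
    have "\<bar>v' t\<bar> \<le> 2 * (norm e * norm (f1 (y1 t) - f2 (y2 t)))"
      unfolding v'_def e_def using Cauchy_Schwarz_ineq2 by (simp add: abs_mult)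
    also have "\<dots> \<le> 2 * (norm e * (L * norm e + \<eta>))"
      using dn by (simp add: mult_left_mono)
    also have "\<dots> \<le> c * norm e ^ 2 + \<eta>^2"
    proof -
      have "2 * norm e * \<eta> \<le> norm e ^ 2 + \<eta> ^ 2" using sum_squares_bound[of "norm e" \<eta>] by simp
      then show ?thesis unfolding c_def by (simp add: algebra_simps power2_eq_square)
    qed
    also have "\<dots> = c * v t + \<eta>^2" unfolding v_def e_def by (simp add: power2_norm_eq_inner)
    finally show ?thesis .
  qed
  have v0: "v 0 = norm (y1 0 - y2 0) ^ 2" unfolding v_def by (simp add: power2_norm_eq_inner)
  have vs: "v s = norm (y1 s - y2 s) ^ 2" unfolding v_def by (simp add: power2_norm_eq_inner)
  show ?thesis
  proof (cases "0 \<le> s")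
    case True
    define w where "w = (\<lambda>t. v t * exp (- c * t) - \<eta>^2 * t)"
    have "w s \<le> w 0"
    proof (rule DERIV_nonpos_imp_nonincreasing[OF True])
      fix t assume t: "0 \<le> t" "t \<le> s"
      then have tI: "t \<in> {-\<delta><..<\<delta>}" using s by auto
      have "(w has_real_derivative (v' t * exp (- c * t) + v t * (exp (- c * t) * (- c)) - \<eta>^2)) (at t)"
        unfolding w_def
        by (auto intro!: derivative_eq_intros vder[OF tI] simp: algebra_simps)
      moreover have "v' t * exp (- c * t) + v t * (exp (- c * t) * (- c)) - \<eta>^2 \<le> 0"
      proof -
        have ex: "exp (- c * t) \<le> 1" using c0 t by simp
        have "v' t * exp (- c * t) \<le> (c * v t + \<eta>^2) * exp (- c * t)"
          using vbound[OF tI] by (intro mult_right_mono) auto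
        moreover have "\<eta>^2 * exp (- c * t) \<le> \<eta>^2" using ex by (simp add: mult_left_le)
        ultimately show ?thesis by (simp add: algebra_simps)
      qed
      ultimately show "\<exists>y. (w has_real_derivative y) (at t) \<and> y \<le> 0" by blast
    qed
    then have "v s * exp (- c * s) \<le> v 0 + \<eta>^2 * s" unfolding w_def by simp
    then have "v s \<le> (v 0 + \<eta>^2 * s) * exp (c * s)"
      by (simp add: exp_minus field_simps)
    then show ?thesis using True v0 vs unfolding c_def by simp
  next
    case False
    define w where "w = (\<lambda>t. v t * exp (c * t) + \<eta>^2 * t)"
    have "w s \<le> w 0"
    proof (rule DERIV_nonneg_imp_nondecreasing[of s 0 w])
      show "s \<le> 0" using False by simp
      fix t assume t: "s \<le> t" "t \<le> 0"
      then have tI: "t \<in> {-\<delta><..<\<delta>}" using s by auto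
      have "(w has_real_derivative (v' t * exp (c * t) + v t * (exp (c * t) * c) + \<eta>^2)) (at t)"
        unfolding w_def
        by (auto intro!: derivative_eq_intros vder[OF tI] simp: algebra_simps)
      moreover have "0 \<le> v' t * exp (c * t) + v t * (exp (c * t) * c) + \<eta>^2"
      proof -
        have ex: "exp (c * t) \<le> 1" using c0 t by (simp add: mult_nonneg_nonpos)
        have "- ((c * v t + \<eta>^2) * exp (c * t)) \<le> v' t * exp (c * t)"
        proof -
          have "- (c * v t + \<eta>^2) \<le> v' t" using vbound[OF tI] by (simp add: abs_le_iff)
          from mult_right_mono[OF this exp_ge_zero[of "c * t"]]
          show ?thesis by (simp only: mult_minus_left)
        qed
        moreover have "\<eta>^2 * exp (c * t) \<le> \<eta>^2" using ex by (simp add: mult_left_le)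
        ultimately show ?thesis by (simp add: algebra_simps)
      qed
      ultimately show "\<exists>y. (w has_real_derivative y) (at t) \<and> 0 \<le> y" by blast
    qed
    then have "v s * exp (c * s) \<le> v 0 - \<eta>^2 * s" unfolding w_def by simp
    then have "v s \<le> (v 0 - \<eta>^2 * s) * exp (- (c * s))"
      by (simp add: exp_minus field_simps)
    then show ?thesis using False v0 vs unfolding c_def by simp
  qed
qed




lemma grad_lip:
  fixes f :: "'a::euclidean_space \<Rightarrow> real"
  assumes sm: "smooth_on S f" and K: "compact K" "K \<subseteq> S"
    and gb: "\<And>x. x \<in> K \<Longrightarrow> norm (grad f x) \<le> c1"
  shows "\<exists>LG\<ge>0. \<forall>y1\<in>K. \<forall>y2\<in>K. norm (grad f y1 - grad f y2) \<le> LG * norm (y1 - y2)"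
proof -
  have oS: "open S" using sm unfolding smooth_on_def by simp
  obtain r where r: "r > 0" "(\<Union>x\<in>K. cball x r) \<subseteq> S"
    using compact_subset_open_imp_cball_epsilon_subset[OF K(1) oS K(2)] by blast
  define K2 where "K2 = {x + z | x z. x \<in> K \<and> z \<in> cball 0 r}"
  have cK2: "compact K2" unfolding K2_def by (intro compact_sums K(1)) simp
  have K2S: "K2 \<subseteq> S"
  proof
    fix y assume "y \<in> K2"
    then obtain x z where "y = x + z" "x \<in> K" "z \<in> cball 0 r" unfolding K2_def by blast
    then have "y \<in> cball x r" by (simp add: dist_norm)
    then show "y \<in> S" using r \<open>x \<in> K\<close> by blast
  qed
  define gi where "gi = (\<lambda>i x. frechet_derivative f (at x) i)"
  have gi_ip: "gi i \<in> iter_partials f" if "i \<in> Basis" for i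
    unfolding gi_def using smooth_partial[OF sm iter_partials.base that] .
  define hij where "hij = (\<lambda>i j x. frechet_derivative (gi i) (at x) j)"
  have hij_cont: "continuous_on S (hij i j)" if "i \<in> Basis" "j \<in> Basis" for i j
    unfolding hij_def using smooth_member(1)[OF sm smooth_partial[OF sm gi_ip[OF that(1)] that(2)]] .
  define H where "H = (\<lambda>x. \<Sum>i\<in>Basis. \<Sum>j\<in>Basis. \<bar>hij i j x\<bar>)"
  have "continuous_on K2 H" unfolding H_def
    by (intro continuous_intros continuous_on_subset[OF hij_cont K2S]) auto
  then have "bounded (H ` K2)" using cK2 compact_continuous_image compact_imp_bounded by blast
  then obtain M0 where M0: "\<And>x. x \<in> K2 \<Longrightarrow> norm (H x) \<le> M0" unfolding bounded_iff by auto
  define M where "M = max M0 0"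
  have M: "\<And>x. x \<in> K2 \<Longrightarrow> H x \<le> M" "M \<ge> 0" using M0 unfolding M_def by force+
  have gi_local: "\<bar>gi i y1 - gi i y2\<bar> \<le> M * norm (y1 - y2)"
    if i: "i \<in> Basis" and y: "y1 \<in> K" "y2 \<in> cball y1 r" for i y1 y2
  proof -
    have cb: "cball y1 r \<subseteq> K2"
    proof
      fix z assume "z \<in> cball y1 r"
      then have "z = y1 + (z - y1)" "z - y1 \<in> cball 0 r" by (auto simp: dist_norm norm_minus_commute)
      then show "z \<in> K2" unfolding K2_def using y(1) by blast
    qed
    have "norm (gi i y2 - gi i y1) \<le> M * norm (y2 - y1)"
    proof (rule differentiable_bound[of "cball y1 r" "gi i" "\<lambda>x. frechet_derivative (gi i) (at x)"])
      show "convex (cball y1 r)" by simp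
      fix x assume x: "x \<in> cball y1 r"
      then have xS: "x \<in> S" using cb K2S by blast
      have "gi i differentiable (at x)" using smooth_member(2)[OF sm gi_ip[OF i] xS] .
      then show "(gi i has_derivative frechet_derivative (gi i) (at x)) (at x within cball y1 r)"
        using frechet_derivative_works has_derivative_at_withinI by blast
      have lin: "linear (frechet_derivative (gi i) (at x))"
        using linear_frechet_derivative[OF \<open>gi i differentiable (at x)\<close>] .
      show "onorm (frechet_derivative (gi i) (at x)) \<le> M"
      proof (rule onorm_le)
        fix v :: 'a
        have "norm (frechet_derivative (gi i) (at x) v) = \<bar>\<Sum>j\<in>Basis. (v \<bullet> j) * hij i j x\<bar>"
          using lin_expand[OF lin, of v] unfolding hij_def by simp
        also have "\<dots> \<le> (\<Sum>j\<in>Basis. \<bar>(v \<bullet> j) * hij i j x\<bar>)" by (rule sum_abs)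
        also have "\<dots> \<le> (\<Sum>j\<in>Basis. norm v * \<bar>hij i j x\<bar>)"
          by (intro sum_mono) (simp add: abs_mult Basis_le_norm mult_right_mono)
        also have "\<dots> = norm v * (\<Sum>j\<in>Basis. \<bar>hij i j x\<bar>)" by (simp add: sum_distrib_left)
        also have "\<dots> \<le> norm v * H x"
        proof -
          have "(\<Sum>j\<in>Basis. \<bar>hij i j x\<bar>) \<le> H x" unfolding H_def
            using i by (intro member_le_sum) (auto intro: sum_nonneg)
          then show ?thesis by (simp add: mult_left_mono)
        qed
        also have "\<dots> \<le> norm v * M" using M(1) x cb by (simp add: mult_left_mono subset_iff)
        finally show "norm (frechet_derivative (gi i) (at x) v) \<le> M * norm v" by (simp add: mult.commute)
      qed
    qed (use y r in auto)
    then show ?thesis by (simp add: abs_minus_commute norm_minus_commute)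
  qed
  have gsum: "grad f x = (\<Sum>i\<in>Basis. gi i x *\<^sub>R i)" for x unfolding grad_def gi_def by simp
  define LG where "LG = real DIM('a) * M + 2 * c1 / r"
  have c1: "0 \<le> c1" if "K \<noteq> {}" using gb that norm_ge_zero order_trans by blast
  show ?thesis
  proof (cases "K = {}")
    case True then show ?thesis by (intro exI[of _ 0]) auto
  next
    case False
    have LG0: "LG \<ge> 0" unfolding LG_def using M(2) c1[OF False] r by simp
    show ?thesis
    proof (intro exI[of _ LG] conjI LG0 ballI)
      fix y1 y2 assume y: "y1 \<in> K" "y2 \<in> K"
      show "norm (grad f y1 - grad f y2) \<le> LG * norm (y1 - y2)"
      proof (cases "norm (y1 - y2) \<le> r")
        case True
        then have y2c: "y2 \<in> cball y1 r" by (simp add: dist_norm)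
        have "norm (grad f y1 - grad f y2) = norm (\<Sum>i\<in>Basis. (gi i y1 - gi i y2) *\<^sub>R i)"
          unfolding gsum by (simp add: sum_subtractf scaleR_diff_left)
        also have "\<dots> \<le> (\<Sum>i\<in>(Basis::'a set). M * norm (y1 - y2))"
        proof (rule order_trans[OF norm_sum], rule sum_mono)
          fix i :: 'a assume "i \<in> Basis"
          then show "norm ((gi i y1 - gi i y2) *\<^sub>R i) \<le> M * norm (y1 - y2)"
            using gi_local[OF _ y(1) y2c] by simp
        qed
        also have "\<dots> = real DIM('a) * M * norm (y1 - y2)" by simp
        also have "\<dots> \<le> LG * norm (y1 - y2)" unfolding LG_def using c1[OF False] r
          by (intro mult_right_mono) auto
        finally show ?thesis .
      next
        case False
        have "norm (grad f y1 - grad f y2) \<le> norm (grad f y1) + norm (grad f y2)" by (rule norm_triangle_ineq4)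
        also have "\<dots> \<le> 2 * c1" using gb[OF y(1)] gb[OF y(2)] by simp
        also have "\<dots> = (2 * c1 / r) * r" using r by simp
        also have "\<dots> \<le> (2 * c1 / r) * norm (y1 - y2)" using False c1[OF \<open>K \<noteq> {}\<close>] r
          by (intro mult_left_mono) auto
        also have "\<dots> \<le> LG * norm (y1 - y2)" unfolding LG_def using M(2)
          by (intro mult_right_mono) auto
        finally show ?thesis .
      qed
    qed
  qed
qed




lemma quot_diff:
  fixes a1 a2 :: "'a::real_normed_vector"
  assumes "norm a2 \<le> Na" "m \<le> D1" "m \<le> D2" "0 < m"
  shows "norm (a1 /\<^sub>R D1 - a2 /\<^sub>R D2) \<le> norm (a1 - a2) / m + Na * \<bar>D1 - D2\<bar> / m^2"
proof -
  have D: "0 < D1" "0 < D2" using assms by auto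
  have eq: "a1 /\<^sub>R D1 - a2 /\<^sub>R D2 = (a1 - a2) /\<^sub>R D1 + (1/D1 - 1/D2) *\<^sub>R a2"
    by (simp add: algebra_simps divide_inverse)
  have "norm (a1 /\<^sub>R D1 - a2 /\<^sub>R D2) \<le> norm ((a1 - a2) /\<^sub>R D1) + norm ((1/D1 - 1/D2) *\<^sub>R a2)"
    unfolding eq by (rule norm_triangle_ineq)
  also have "norm ((a1 - a2) /\<^sub>R D1) = norm (a1 - a2) / D1" using D by (simp add: divide_inverse mult.commute)
  also have "\<dots> \<le> norm (a1 - a2) / m" using assms D by (intro divide_left_mono) auto
  also have "norm ((1/D1 - 1/D2) *\<^sub>R a2) = \<bar>D1 - D2\<bar> / (D1 * D2) * norm a2"
    using D by (simp add: field_simps abs_div abs_mult abs_minus_commute)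
  also have "\<dots> \<le> \<bar>D1 - D2\<bar> / m^2 * Na"
  proof (rule mult_mono)
    have "m^2 \<le> D1 * D2" using assms by (simp add: power2_eq_square mult_mono)
    then show "\<bar>D1 - D2\<bar> / (D1 * D2) \<le> \<bar>D1 - D2\<bar> / m^2"
      using assms by (intro divide_left_mono) auto
    show "norm a2 \<le> Na" by fact
    show "0 \<le> \<bar>D1 - D2\<bar> / m\<^sup>2" by simp
  qed simp
  finally show ?thesis by (simp add: algebra_simps)
qed

lemma inner_diff_bound:
  fixes a1 a2 g1 g2 :: "'a::real_inner"
  shows "\<bar>a1 \<bullet> g1 - a2 \<bullet> g2\<bar> \<le> norm (a1 - a2) * norm g1 + norm a2 * norm (g1 - g2)"
proof -
  have "a1 \<bullet> g1 - a2 \<bullet> g2 = (a1 - a2) \<bullet> g1 + a2 \<bullet> (g1 - g2)"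
    by (simp add: inner_diff_left inner_diff_right)
  then have "\<bar>a1 \<bullet> g1 - a2 \<bullet> g2\<bar> \<le> \<bar>(a1 - a2) \<bullet> g1\<bar> + \<bar>a2 \<bullet> (g1 - g2)\<bar>" by simp
  also have "\<dots> \<le> norm (a1 - a2) * norm g1 + norm a2 * norm (g1 - g2)"
    by (intro add_mono Cauchy_Schwarz_ineq2)
  finally show ?thesis .
qed

lemma A_upper:
  fixes \<Gamma> :: "'a::topological_space set" and A :: "'a \<Rightarrow> 'b::euclidean_space \<Rightarrow> 'b"
  assumes "compact \<Gamma>" "\<forall>p\<in>\<Gamma>. linear (A p)" "continuous_on \<Gamma> (\<lambda>p. A p)"
  shows "\<exists>N\<ge>0. \<forall>p\<in>\<Gamma>. \<forall>v. norm (A p v) \<le> N * norm v"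
proof -
  have ci: "continuous_on \<Gamma> (\<lambda>p. A p i)" for i
    using continuous_on_product_then_coordinatewise[OF assms(3)] .
  have "continuous_on \<Gamma> (\<lambda>p. \<Sum>i\<in>Basis. norm (A p i))"
    by (intro continuous_intros ci)
  then have "bounded ((\<lambda>p. \<Sum>i\<in>Basis. norm (A p i)) ` \<Gamma>)"
    using assms(1) compact_continuous_image compact_imp_bounded by blast
  then obtain N0 where N0: "\<And>p. p \<in> \<Gamma> \<Longrightarrow> norm (\<Sum>i\<in>Basis. norm (A p i)) \<le> N0"
    unfolding bounded_iff by auto
  define N where "N = max N0 0"
  show ?thesis
  proof (intro exI[of _ N] conjI ballI allI)
    show "0 \<le> N" unfolding N_def by simp
    fix p v assume p: "p \<in> \<Gamma>"
    have "norm (A p v) = norm (\<Sum>i\<in>Basis. (v \<bullet> i) *\<^sub>R A p i)"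
      using lin_expand[of "A p" v] assms(2) p by simp
    also have "\<dots> \<le> (\<Sum>i\<in>Basis. norm v * norm (A p i))"
    proof (rule order_trans[OF norm_sum], rule sum_mono)
      fix i :: 'b assume "i \<in> Basis"
      then show "norm ((v \<bullet> i) *\<^sub>R A p i) \<le> norm v * norm (A p i)"
        by (simp add: Basis_le_norm mult_right_mono)
    qed
    also have "\<dots> = norm v * (\<Sum>i\<in>Basis. norm (A p i))" by (simp add: sum_distrib_left)
    also have "\<dots> \<le> norm v * N"
      using N0[OF p] unfolding N_def by (intro mult_left_mono) auto
    finally show "norm (A p v) \<le> N * norm v" by (simp add: mult.commute)
  qed
qed

lemma A_lower:
  fixes \<Gamma> :: "'a::metric_space set" and A :: "'a \<Rightarrow> 'b::euclidean_space \<Rightarrow> 'b"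
  assumes "compact \<Gamma>" "\<Gamma> \<noteq> {}" "\<forall>p\<in>\<Gamma>. linear (A p)" "continuous_on \<Gamma> (\<lambda>p. A p)"
    "\<forall>p\<in>\<Gamma>. \<forall>x. x \<noteq> 0 \<longrightarrow> A p x \<bullet> x > 0"
  shows "\<exists>lm>0. \<forall>p\<in>\<Gamma>. \<forall>v. lm * norm v ^ 2 \<le> A p v \<bullet> v"
proof -
  have ci: "continuous_on \<Gamma> (\<lambda>p. A p i)" for i
    using continuous_on_product_then_coordinatewise[OF assms(4)] .
  define Q where "Q = (\<lambda>z::'a \<times> 'b. \<Sum>i\<in>Basis. (snd z \<bullet> i) * (A (fst z) i \<bullet> snd z))"
  define X where "X = \<Gamma> \<times> sphere (0::'b) 1"
  have cX: "compact X" unfolding X_def using assms(1) by (intro compact_Times) auto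
  have neX: "X \<noteq> {}"
  proof -
    obtain b :: 'b where "b \<in> Basis" using nonempty_Basis by blast
    then have "b \<in> sphere 0 1" by simp
    then show ?thesis unfolding X_def using assms(2) by blast
  qed
  have cQ: "continuous_on X Q" unfolding Q_def
  proof (intro continuous_intros)
    fix i :: 'b
    show "continuous_on X (\<lambda>x. A (fst x) i)"
      by (rule continuous_on_compose2[OF ci[of i] continuous_on_fst[OF continuous_on_id]]) (auto simp: X_def)
  qed
  have QA: "Q (p, v) = A p v \<bullet> v" if "p \<in> \<Gamma>" for p v
  proof -
    have "A p v \<bullet> v = (\<Sum>i\<in>Basis. (v \<bullet> i) *\<^sub>R A p i) \<bullet> v"
      using lin_expand[of "A p" v] assms(3) that by simp
    then show ?thesis unfolding Q_def by (simp add: inner_sum_left)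
  qed
  obtain z0 where z0: "z0 \<in> X" "\<And>z. z \<in> X \<Longrightarrow> Q z0 \<le> Q z"
    using continuous_attains_inf[OF cX neX cQ] by blast
  obtain p0 v0 where pv0: "z0 = (p0, v0)" "p0 \<in> \<Gamma>" "norm v0 = 1" using z0(1) unfolding X_def by auto
  define lm where "lm = Q z0"
  have lpos: "lm > 0" unfolding lm_def pv0(1) QA[OF pv0(2)] proof -
    have "v0 \<noteq> 0" using pv0(3) by auto
    then show "0 < A p0 v0 \<bullet> v0" using assms(5) pv0(2) by blast
  qed
  show ?thesis
  proof (intro exI[of _ lm] conjI lpos ballI allI)
    fix p v assume p: "p \<in> \<Gamma>"
    show "lm * norm v ^ 2 \<le> A p v \<bullet> v"
    proof (cases "v = 0")
      case True then show ?thesis using assms(3) p by (simp add: linear_0)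
    next
      case False
      define u where "u = v /\<^sub>R norm v"
      have u1: "norm u = 1" unfolding u_def using False by simp
      have "lm \<le> Q (p, u)" unfolding lm_def using z0(2)[of "(p,u)"] p u1 unfolding X_def by auto
      also have "\<dots> = A p u \<bullet> u" using QA[OF p] .
      finally have lu: "lm \<le> A p u \<bullet> u" .
      define nv where "nv = norm v"
      have vu: "v = nv *\<^sub>R u" unfolding u_def nv_def using False by simp
      have "A p v \<bullet> v = A p (nv *\<^sub>R u) \<bullet> (nv *\<^sub>R u)" using vu by simp
      also have "\<dots> = nv ^ 2 * (A p u \<bullet> u)"
        using assms(3) p by (simp add: linear_scale power2_eq_square)
      finally have "A p v \<bullet> v = norm v ^ 2 * (A p u \<bullet> u)" unfolding nv_def .
      then show ?thesis using mult_right_mono[OF lu, of "norm v ^ 2"] by (simp add: mult.commute)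
    qed
  qed
qed




context
  fixes \<Gamma> :: "'b set" and A :: "'b \<Rightarrow> 'a::euclidean_space \<Rightarrow> 'a" and K :: "'a set"
    and G :: "'a \<Rightarrow> 'a" and N lm c0 c1 LG :: real
  assumes N: "\<forall>p\<in>\<Gamma>. \<forall>v. norm (A p v) \<le> N * norm v" "N \<ge> 0"
    and lm: "lm > 0" "\<forall>p\<in>\<Gamma>. \<forall>v. lm * norm v ^ 2 \<le> A p v \<bullet> v"
    and lin: "\<forall>p\<in>\<Gamma>. linear (A p)"
    and Gb: "\<forall>y\<in>K. c0 \<le> norm (G y) \<and> norm (G y) \<le> c1" "c0 > 0"
    and LG: "\<forall>y1\<in>K. \<forall>y2\<in>K. norm (G y1 - G y2) \<le> LG * norm (y1 - y2)" "LG \<ge> 0"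
begin

definition "Fv p y = A p (G y) /\<^sub>R (A p (G y) \<bullet> G y)"

lemma D_lower: "p \<in> \<Gamma> \<Longrightarrow> y \<in> K \<Longrightarrow> lm * c0^2 \<le> A p (G y) \<bullet> G y"
proof -
  assume p: "p \<in> \<Gamma>" and y: "y \<in> K"
  have "lm * c0^2 \<le> lm * norm (G y)^2"
    using Gb y lm by (intro mult_left_mono power_mono) auto
  also have "\<dots> \<le> A p (G y) \<bullet> G y" using lm p by auto
  finally show ?thesis .
qed

lemma m_pos: "0 < lm * c0^2" using lm Gb by simp

lemma c1_nonneg: "y \<in> K \<Longrightarrow> 0 \<le> c1" using Gb by (meson norm_ge_zero order_trans)

lemma a_bound: "p \<in> \<Gamma> \<Longrightarrow> y \<in> K \<Longrightarrow> norm (A p (G y)) \<le> N * c1"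
proof -
  assume p: "p \<in> \<Gamma>" and y: "y \<in> K"
  have "norm (A p (G y)) \<le> N * norm (G y)" using N p by auto
  also have "\<dots> \<le> N * c1" using Gb y N by (intro mult_left_mono) auto
  finally show ?thesis .
qed

lemma Fv_bound: "p \<in> \<Gamma> \<Longrightarrow> y \<in> K \<Longrightarrow> norm (Fv p y) \<le> N * c1 / (lm * c0^2)"
proof -
  assume p: "p \<in> \<Gamma>" and y: "y \<in> K"
  have D: "lm * c0^2 \<le> A p (G y) \<bullet> G y" using D_lower[OF p y] .
  have Dp: "0 < A p (G y) \<bullet> G y" using D m_pos by linarith
  have "norm (Fv p y) = norm (A p (G y)) / (A p (G y) \<bullet> G y)"
    unfolding Fv_def using Dp by (simp add: divide_inverse mult.commute)
  also have "\<dots> \<le> N * c1 / (A p (G y) \<bullet> G y)"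
    using a_bound[OF p y] Dp by (intro divide_right_mono) auto
  also have "\<dots> \<le> N * c1 / (lm * c0^2)"
    using D m_pos N c1_nonneg[OF y] by (intro divide_left_mono) auto
  finally show ?thesis .
qed

lemma Fv_lip: "\<exists>LF\<ge>0. \<forall>p\<in>\<Gamma>. \<forall>y1\<in>K. \<forall>y2\<in>K. norm (Fv p y1 - Fv p y2) \<le> LF * norm (y1 - y2)"
proof (cases "K = {}")
  case True then show ?thesis by auto
next
  case False
  then obtain y0 where "y0 \<in> K" by blast
  have c1: "0 \<le> c1" using c1_nonneg[OF \<open>y0 \<in> K\<close>] .
  define m where "m = lm * c0^2"
  have m: "0 < m" unfolding m_def using m_pos .
  define LF where "LF = N * LG / m + N * c1 * (2 * N * c1 * LG) / m^2"
  show ?thesis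
  proof (intro exI[of _ LF] conjI ballI)
    show "0 \<le> LF" unfolding LF_def using N LG m c1 by simp
    fix p y1 y2 assume p: "p \<in> \<Gamma>" and y: "y1 \<in> K" "y2 \<in> K"
    define d where "d = norm (y1 - y2)"
    have aa: "norm (A p (G y1) - A p (G y2)) \<le> N * LG * d"
    proof -
      have "A p (G y1) - A p (G y2) = A p (G y1 - G y2)" using lin p by (simp add: linear_diff)
      then have "norm (A p (G y1) - A p (G y2)) \<le> N * norm (G y1 - G y2)" using N p by auto
      also have "\<dots> \<le> N * (LG * d)" unfolding d_def using LG y N by (intro mult_left_mono) auto
      finally show ?thesis by simp
    qed
    have DD: "\<bar>A p (G y1) \<bullet> G y1 - A p (G y2) \<bullet> G y2\<bar> \<le> 2 * N * c1 * LG * d"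
    proof -
      have "\<bar>A p (G y1) \<bullet> G y1 - A p (G y2) \<bullet> G y2\<bar>
         \<le> norm (A p (G y1) - A p (G y2)) * norm (G y1) + norm (A p (G y2)) * norm (G y1 - G y2)"
        by (rule inner_diff_bound)
      also have "\<dots> \<le> (N * LG * d) * c1 + (N * c1) * (LG * d)"
        using aa Gb y a_bound[OF p y(2)] LG N c1 unfolding d_def
        by (intro add_mono mult_mono) auto
      finally show ?thesis by (simp add: algebra_simps)
    qed
    have "norm (Fv p y1 - Fv p y2) \<le> norm (A p (G y1) - A p (G y2)) / m
        + (N * c1) * \<bar>A p (G y1) \<bullet> G y1 - A p (G y2) \<bullet> G y2\<bar> / m^2"
      unfolding Fv_def m_def
      by (rule quot_diff[OF a_bound[OF p y(2)] D_lower[OF p y(1)] D_lower[OF p y(2)] m_pos])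
    also have "\<dots> \<le> (N * LG * d) / m + (N * c1) * (2 * N * c1 * LG * d) / m^2"
      using aa DD m N c1 by (intro add_mono divide_right_mono mult_left_mono) auto
    also have "\<dots> = LF * d" unfolding LF_def by (simp add: algebra_simps)
    finally show "norm (Fv p y1 - Fv p y2) \<le> LF * norm (y1 - y2)" unfolding d_def .
  qed
qed

lemma Fv_pcont: "\<exists>C\<ge>0. \<forall>p\<in>\<Gamma>. \<forall>p'\<in>\<Gamma>. \<forall>y\<in>K.
   norm (Fv p y - Fv p' y) \<le> C * (\<Sum>i\<in>Basis. norm (A p i - A p' i))"
proof (cases "K = {}")
  case True then show ?thesis by auto
next
  case False
  then obtain y0 where "y0 \<in> K" by blast
  have c1: "0 \<le> c1" using c1_nonneg[OF \<open>y0 \<in> K\<close>] .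
  define m where "m = lm * c0^2"
  have m: "0 < m" unfolding m_def using m_pos .
  define C where "C = c1 / m + N * c1 * c1 * c1 / m^2"
  show ?thesis
  proof (intro exI[of _ C] conjI ballI)
    show "0 \<le> C" unfolding C_def using N m c1 by simp
    fix p p' y assume p: "p \<in> \<Gamma>" "p' \<in> \<Gamma>" and y: "y \<in> K"
    define dA where "dA = (\<Sum>i\<in>Basis. norm (A p i - A p' i))"
    have dA0: "0 \<le> dA" unfolding dA_def by (simp add: sum_nonneg)
    have aa: "norm (A p (G y) - A p' (G y)) \<le> c1 * dA"
    proof -
      have "A p (G y) - A p' (G y) = (\<Sum>i\<in>Basis. (G y \<bullet> i) *\<^sub>R (A p i - A p' i))"
        using lin_expand[of "A p" "G y"] lin_expand[of "A p'" "G y"] lin p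
        by (simp add: sum_subtractf scaleR_diff_right)
      also have "norm \<dots> \<le> (\<Sum>i\<in>Basis. norm (G y) * norm (A p i - A p' i))"
      proof (rule order_trans[OF norm_sum], rule sum_mono)
        fix i :: 'a assume "i \<in> Basis"
        then show "norm ((G y \<bullet> i) *\<^sub>R (A p i - A p' i)) \<le> norm (G y) * norm (A p i - A p' i)"
          by (simp add: Basis_le_norm mult_right_mono)
      qed
      also have "\<dots> = norm (G y) * dA" unfolding dA_def by (simp add: sum_distrib_left)
      also have "\<dots> \<le> c1 * dA" using Gb y dA0 by (intro mult_right_mono) auto
      finally show ?thesis .
    qed
    have DD: "\<bar>A p (G y) \<bullet> G y - A p' (G y) \<bullet> G y\<bar> \<le> c1 * dA * c1"
    proof -
      have "\<bar>A p (G y) \<bullet> G y - A p' (G y) \<bullet> G y\<bar>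
         \<le> norm (A p (G y) - A p' (G y)) * norm (G y) + norm (A p' (G y)) * norm (G y - G y)"
        by (rule inner_diff_bound)
      also have "\<dots> \<le> c1 * dA * c1" using aa Gb y c1 dA0 by (simp, intro mult_mono) auto
      finally show ?thesis .
    qed
    have "norm (Fv p y - Fv p' y) \<le> norm (A p (G y) - A p' (G y)) / m
        + (N * c1) * \<bar>A p (G y) \<bullet> G y - A p' (G y) \<bullet> G y\<bar> / m^2"
      unfolding Fv_def m_def
      by (rule quot_diff[OF a_bound[OF p(2) y] D_lower[OF p(1) y] D_lower[OF p(2) y] m_pos])
    also have "\<dots> \<le> (c1 * dA) / m + (N * c1) * (c1 * dA * c1) / m^2"
      using aa DD m N c1 by (intro add_mono divide_right_mono mult_left_mono) auto
    also have "\<dots> = C * dA" unfolding C_def by (simp add: algebra_simps)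
    finally show "norm (Fv p y - Fv p' y) \<le> C * (\<Sum>i\<in>Basis. norm (A p i - A p' i))" unfolding dA_def .
  qed
qed

end




lemma closure_near_Gamma:
  fixes \<Gamma> \<Omega> S :: "'a::euclidean_space set" and \<phi> :: "'a \<Rightarrow> real" and A :: "'a \<Rightarrow> 'a \<Rightarrow> 'a"
    and \<gamma> :: "'a \<Rightarrow> real \<Rightarrow> 'a"
  assumes bdd: "bounded \<Omega>" and S: "closure \<Omega> \<subseteq> S" "smooth_on S \<phi>"
    and \<Gamma>def: "\<Gamma> = {x\<in>\<Omega>. \<phi> x = 0}" and \<Gamma>c: "compact \<Gamma>" "\<Gamma> \<noteq> {}"
    and c0: "0 < c0" and gb: "\<forall>x\<in>closure \<Omega>. c0 \<le> norm (grad \<phi> x) \<and> norm (grad \<phi> x) \<le> c1"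
    and A_lin: "\<forall>p\<in>\<Gamma>. linear (A p)"
    and A_pd: "\<forall>p\<in>\<Gamma>. \<forall>x. x \<noteq> 0 \<longrightarrow> A p x \<bullet> x > 0"
    and A_cont: "continuous_on \<Gamma> (\<lambda>p. A p)"
    and fl: "\<forall>p\<in>\<Gamma>. \<gamma> p 0 = p \<and>
          (\<forall>s\<in>{-\<delta><..<\<delta>}. \<gamma> p s \<in> closure \<Omega> \<and>
             (\<gamma> p has_vector_derivative
                (A p (grad \<phi> (\<gamma> p s)) /\<^sub>R (A p (grad \<phi> (\<gamma> p s)) \<bullet> grad \<phi> (\<gamma> p s)))) (at s))"
    and bij: "bij_betw (\<lambda>(p, s). \<gamma> p s) (\<Gamma> \<times> {-\<delta><..<\<delta>}) (U_nbhd \<Omega> \<phi> \<delta>)"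
    and x0: "x0 \<in> closure \<Omega>" "\<bar>\<phi> x0\<bar> < \<delta>"
  shows "x0 \<in> \<Omega>"
proof -
  define K where "K = closure \<Omega>"
  define I where "I = {-\<delta><..<\<delta>}"
  define G where "G = grad \<phi>"
  have cK: "compact K" unfolding K_def using bdd compact_closure by blast
  have KS: "K \<subseteq> S" unfolding K_def using S by simp
  obtain N where N: "N \<ge> 0" "\<forall>p\<in>\<Gamma>. \<forall>v. norm (A p v) \<le> N * norm v"
    using A_upper[OF \<Gamma>c(1) A_lin A_cont] by blast
  obtain lm where lm: "lm > 0" "\<forall>p\<in>\<Gamma>. \<forall>v. lm * norm v ^ 2 \<le> A p v \<bullet> v"
    using A_lower[OF \<Gamma>c A_lin A_cont A_pd] by blast
  have Gb: "\<forall>y\<in>K. c0 \<le> norm (G y) \<and> norm (G y) \<le> c1" using gb unfolding K_def G_def .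
  obtain LG where LG: "LG \<ge> 0" "\<forall>y1\<in>K. \<forall>y2\<in>K. norm (G y1 - G y2) \<le> LG * norm (y1 - y2)"
    using grad_lip[OF S(2) cK KS, of c1] Gb unfolding G_def by blast
  note ctx = N(2) N(1) lm(1) lm(2) A_lin Gb c0 LG(2) LG(1)
  have Fv_eq: "Fv A G p y = A p (G y) /\<^sub>R (A p (G y) \<bullet> G y)" for p y
    using Fv_def[OF ctx] .
  obtain LF where LF: "LF \<ge> 0" "\<forall>p\<in>\<Gamma>. \<forall>y1\<in>K. \<forall>y2\<in>K. norm (Fv A G p y1 - Fv A G p y2) \<le> LF * norm (y1 - y2)"
    using Fv_lip[OF ctx] by blast
  obtain C where C: "C \<ge> 0" "\<forall>p\<in>\<Gamma>. \<forall>p'\<in>\<Gamma>. \<forall>y\<in>K.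
     norm (Fv A G p y - Fv A G p' y) \<le> C * (\<Sum>i\<in>Basis. norm (A p i - A p' i))"
    using Fv_pcont[OF ctx] by blast
  define MF where "MF = N * c1 / (lm * c0^2)"
  have MF: "\<And>p y. p \<in> \<Gamma> \<Longrightarrow> y \<in> K \<Longrightarrow> norm (Fv A G p y) \<le> MF"
    unfolding MF_def using Fv_bound[OF ctx] by blast
  have gder: "(\<gamma> p has_vector_derivative Fv A G p (\<gamma> p t)) (at t)" "\<gamma> p t \<in> K"
    if "p \<in> \<Gamma>" "t \<in> I" for p t
  proof -
    have e: "Fv A G p y = A p (grad \<phi> y) /\<^sub>R (A p (grad \<phi> y) \<bullet> grad \<phi> y)" for y
      using Fv_eq unfolding G_def by simp
    show "(\<gamma> p has_vector_derivative Fv A G p (\<gamma> p t)) (at t)" "\<gamma> p t \<in> K"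
      using fl that unfolding e I_def K_def by auto
  qed
  have g0: "\<gamma> p 0 = p" if "p \<in> \<Gamma>" for p using fl that by auto
  have diffK: "\<phi> differentiable (at y)" if "y \<in> K" for y
    using smooth_diff[OF S(2)] KS that by blast
  have phig: "\<phi> (\<gamma> p s) = s" if p: "p \<in> \<Gamma>" and s: "s \<in> I" for p s
  proof -
    have der: "((\<lambda>t. \<phi> (\<gamma> p t) - t) has_field_derivative 0) (at t within I)" if t: "t \<in> I" for t
    proof -
      have d1: "(\<gamma> p has_derivative (\<lambda>h. h *\<^sub>R Fv A G p (\<gamma> p t))) (at t)"
        using gder(1)[OF p t] unfolding has_vector_derivative_def .
      have d2: "(\<phi> has_derivative (\<lambda>v. G (\<gamma> p t) \<bullet> v)) (at (\<gamma> p t))"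
        unfolding G_def using has_deriv_grad diffK gder(2)[OF p t] by blast
      have D: "0 < A p (G (\<gamma> p t)) \<bullet> G (\<gamma> p t)"
        using D_lower[OF ctx p gder(2)[OF p t]] m_pos[OF ctx] by linarith
      have one: "G (\<gamma> p t) \<bullet> Fv A G p (\<gamma> p t) = 1"
        unfolding Fv_eq using D by (simp add: inner_commute)
      have "((\<lambda>t. \<phi> (\<gamma> p t)) has_derivative (\<lambda>h. h * 1)) (at t)"
        using diff_chain_at[OF d1 d2] one by (simp add: o_def)
      then have "((\<lambda>t. \<phi> (\<gamma> p t)) has_field_derivative 1) (at t)"
      proof -
        have "((*) (1::real)) = (\<lambda>h. h * 1)" by auto
        then show ?thesis unfolding has_field_derivative_def using \<open>((\<lambda>t. \<phi> (\<gamma> p t)) has_derivative (\<lambda>h. h * 1)) (at t)\<close> by simp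
      qed
      then have "((\<lambda>t. \<phi> (\<gamma> p t) - t) has_field_derivative 1 - 1) (at t)"
        by (intro derivative_intros)
      then show ?thesis using has_field_derivative_at_within by simp
    qed
    obtain c where c: "\<forall>t\<in>I. \<phi> (\<gamma> p t) - t = c"
      using has_field_derivative_zero_constant[of I, OF _ der] unfolding I_def by auto
    have "0 \<in> I" unfolding I_def using x0 by auto
    then have "c = 0" using c g0[OF p] p \<Gamma>def by force
    then show ?thesis using c s by auto
  qed
  have glip: "norm (\<gamma> p s - \<gamma> p s') \<le> MF * \<bar>s - s'\<bar>" if p: "p \<in> \<Gamma>" and s: "s \<in> I" "s' \<in> I" for p s s'
  proof -
    have "norm (\<gamma> p s - \<gamma> p s') \<le> MF * norm (s - s')"
    proof (rule differentiable_bound[of I "\<gamma> p" "\<lambda>t h. h *\<^sub>R Fv A G p (\<gamma> p t)"])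
      show "convex I" unfolding I_def by simp
      fix t assume t: "t \<in> I"
      show "(\<gamma> p has_derivative (\<lambda>h. h *\<^sub>R Fv A G p (\<gamma> p t))) (at t within I)"
        using gder(1)[OF p t] unfolding has_vector_derivative_def using has_derivative_at_withinI by blast
      show "onorm (\<lambda>h. h *\<^sub>R Fv A G p (\<gamma> p t)) \<le> MF"
      proof (rule onorm_le)
        fix h :: real
        have "norm (h *\<^sub>R Fv A G p (\<gamma> p t)) = \<bar>h\<bar> * norm (Fv A G p (\<gamma> p t))" by simp
        also have "\<dots> \<le> \<bar>h\<bar> * MF" using MF[OF p gder(2)[OF p t]] by (intro mult_left_mono) auto
        finally show "norm (h *\<^sub>R Fv A G p (\<gamma> p t)) \<le> MF * norm h" by (simp add: mult.commute)
      qed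
    qed (use s in auto)
    then show ?thesis by simp
  qed
  have isc: "isCont \<phi> x0" using diffK[of x0] x0 unfolding K_def
    by (simp add: differentiable_imp_continuous_within)
  obtain e where e: "e > 0" "\<And>z. dist z x0 < e \<Longrightarrow> dist (\<phi> z) (\<phi> x0) < \<delta> - \<bar>\<phi> x0\<bar>"
    using isc[unfolded continuous_at_eps_delta] x0(2) by (meson diff_gt_0_iff_gt)
  have "\<exists>p s. p \<in> \<Gamma> \<and> s \<in> I \<and> dist (\<gamma> p s) x0 < inverse (real (Suc k))" for k
  proof -
    have "min e (inverse (real (Suc k))) > 0" using e by simp
    then obtain z where z: "z \<in> \<Omega>" "dist z x0 < min e (inverse (real (Suc k)))"
      using x0(1) unfolding closure_approachable by blast
    have "\<bar>\<phi> z\<bar> < \<delta>" using e(2)[of z] z(2) by (simp add: dist_real_def)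
    then have "z \<in> U_nbhd \<Omega> \<phi> \<delta>" using z unfolding U_nbhd_def by simp
    then have "z \<in> (\<lambda>(p, s). \<gamma> p s) ` (\<Gamma> \<times> I)"
      using bij_betw_imp_surj_on[OF bij] unfolding I_def by simp
    then obtain ps where "ps \<in> \<Gamma> \<times> I" "z = (\<lambda>(p, s). \<gamma> p s) ps" by (rule imageE)
    then obtain p s where "p \<in> \<Gamma>" "s \<in> I" "z = \<gamma> p s" by (cases ps) auto
    then show ?thesis using z by auto
  qed
  then obtain P Sq where PS: "\<And>k. P k \<in> \<Gamma>" "\<And>k. Sq k \<in> I"
      "\<And>k. dist (\<gamma> (P k) (Sq k)) x0 < inverse (real (Suc k))"
    by metis
  have zlim: "(\<lambda>k. \<gamma> (P k) (Sq k)) \<longlonglongrightarrow> x0"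
  proof -
    have "(\<lambda>k. \<gamma> (P k) (Sq k) - x0) \<longlonglongrightarrow> 0"
      by (rule Lim_null_comparison[OF _ LIMSEQ_inverse_real_of_nat])
         (use PS(3) in \<open>auto simp: dist_norm less_imp_le\<close>)
    then show ?thesis using Lim_null by blast
  qed
  have Slim: "Sq \<longlonglongrightarrow> \<phi> x0"
  proof -
    have "(\<lambda>k. \<phi> (\<gamma> (P k) (Sq k))) \<longlonglongrightarrow> \<phi> x0" by (rule isCont_tendsto_compose[OF isc zlim])
    moreover have "\<phi> (\<gamma> (P k) (Sq k)) = Sq k" for k using phig PS by blast
    ultimately show ?thesis by simp
  qed
  obtain p r where pr: "p \<in> \<Gamma>" "strict_mono (r :: nat \<Rightarrow> nat)" "(P \<circ> r) \<longlonglongrightarrow> p"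
    using seq_compactE[OF compact_imp_seq_compact[OF \<Gamma>c(1)]] PS(1) by metis
  define s0 where "s0 = \<phi> x0"
  have s0I: "s0 \<in> I" unfolding s0_def I_def using x0 by auto
  define dA where "dA = (\<lambda>q. \<Sum>i\<in>Basis. norm (A p i - A q i))"
  define c where "c = 2 * LF + 1"
  define b where "b = (\<lambda>k. MF * \<bar>Sq (r k) - s0\<bar>
      + sqrt ((norm (p - P (r k))^2 + (C * dA (P (r k)))^2 * \<bar>s0\<bar>) * exp (c * \<bar>s0\<bar>)))"
  have bnd: "norm (\<gamma> (P (r k)) (Sq (r k)) - \<gamma> p s0) \<le> b k" for k
  proof -
    define q where "q = P (r k)"
    have q: "q \<in> \<Gamma>" unfolding q_def using PS(1) .
    have "norm (\<gamma> q (Sq (r k)) - \<gamma> p s0) \<le> norm (\<gamma> q (Sq (r k)) - \<gamma> q s0) + norm (\<gamma> q s0 - \<gamma> p s0)"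
      using norm_triangle_ineq[of "\<gamma> q (Sq (r k)) - \<gamma> q s0" "\<gamma> q s0 - \<gamma> p s0"] by simp
    also have "norm (\<gamma> q (Sq (r k)) - \<gamma> q s0) \<le> MF * \<bar>Sq (r k) - s0\<bar>"
      using glip[OF q PS(2) s0I] .
    also have "norm (\<gamma> q s0 - \<gamma> p s0)
        \<le> sqrt ((norm (p - q)^2 + (C * dA q)^2 * \<bar>s0\<bar>) * exp (c * \<bar>s0\<bar>))"
    proof (rule real_le_rsqrt)
      have "norm (\<gamma> p s0 - \<gamma> q s0) ^ 2
          \<le> (norm (\<gamma> p 0 - \<gamma> q 0) ^ 2 + (C * dA q)^2 * \<bar>s0\<bar>) * exp ((2*LF+1) * \<bar>s0\<bar>)"
      proof (rule gronwall_sq[where K=K and \<delta>=\<delta>])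
        fix t :: real assume t: "t \<in> {-\<delta><..<\<delta>}"
        show "(\<gamma> p has_vector_derivative Fv A G p (\<gamma> p t)) (at t)" using gder(1)[OF pr(1)] t I_def by blast
        show "(\<gamma> q has_vector_derivative Fv A G q (\<gamma> q t)) (at t)" using gder(1)[OF q] t I_def by blast
        show "\<gamma> p t \<in> K \<and> \<gamma> q t \<in> K" using gder(2)[OF pr(1)] gder(2)[OF q] t I_def by blast
      next
        fix u w assume "u \<in> K" "w \<in> K"
        then show "norm (Fv A G p u - Fv A G p w) \<le> LF * norm (u - w)" using LF pr(1) by blast
      next
        show "0 \<le> LF" by fact
      next
        fix u assume "u \<in> K"
        then show "norm (Fv A G p u - Fv A G q u) \<le> C * dA q" using C pr(1) q unfolding dA_def by blast
      next
        show "s0 \<in> {-\<delta><..<\<delta>}" using s0I I_def by simp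
      qed
      then show "norm (\<gamma> q s0 - \<gamma> p s0) ^ 2
          \<le> (norm (p - q)^2 + (C * dA q)^2 * \<bar>s0\<bar>) * exp (c * \<bar>s0\<bar>)"
        using g0[OF pr(1)] g0[OF q] unfolding c_def by (simp add: norm_minus_commute)
    qed
    finally show ?thesis unfolding b_def q_def by simp
  qed
  have dAlim: "(\<lambda>k. dA (P (r k))) \<longlonglongrightarrow> 0"
  proof -
    have "(\<lambda>k. A (P (r k)) i) \<longlonglongrightarrow> A p i" for i
    proof -
      have "(\<lambda>k. A ((P \<circ> r) k) i) \<longlonglongrightarrow> A p i"
        by (rule continuous_on_tendsto_compose[OF continuous_on_product_then_coordinatewise[OF A_cont] pr(3) pr(1)])
           (use PS(1) in auto)
      then show ?thesis by simp
    qed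
    then have "(\<lambda>k. dA (P (r k))) \<longlonglongrightarrow> (\<Sum>i\<in>Basis. norm (A p i - A p i))"
      unfolding dA_def by (intro tendsto_intros)
    then show ?thesis by simp
  qed
  have plim: "(\<lambda>k. norm (p - P (r k))) \<longlonglongrightarrow> 0"
  proof -
    have "(\<lambda>k. norm (p - P (r k))) \<longlonglongrightarrow> norm (p - p)"
      using pr(3) by (intro tendsto_intros) (simp add: o_def)
    then show ?thesis by simp
  qed
  have Srlim: "(\<lambda>k. Sq (r k)) \<longlonglongrightarrow> s0"
    using LIMSEQ_subseq_LIMSEQ[OF Slim pr(2)] unfolding s0_def by (simp add: o_def)
  have blim: "b \<longlonglongrightarrow> 0"
  proof -
    have "b \<longlonglongrightarrow> MF * \<bar>s0 - s0\<bar> + sqrt ((0^2 + (C * 0)^2 * \<bar>s0\<bar>) * exp (c * \<bar>s0\<bar>))"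
      unfolding b_def by (intro tendsto_intros Srlim plim dAlim)
    then show ?thesis by simp
  qed
  have "(\<lambda>k. \<gamma> (P (r k)) (Sq (r k)) - \<gamma> p s0) \<longlonglongrightarrow> 0"
    by (rule Lim_null_comparison[OF _ blim]) (use bnd in auto)
  then have l1: "(\<lambda>k. \<gamma> (P (r k)) (Sq (r k))) \<longlonglongrightarrow> \<gamma> p s0" using Lim_null by blast
  have l2: "(\<lambda>k. \<gamma> (P (r k)) (Sq (r k))) \<longlonglongrightarrow> x0"
    using LIMSEQ_subseq_LIMSEQ[OF zlim pr(2)] by (simp add: o_def)
  have "x0 = \<gamma> p s0" using LIMSEQ_unique[OF l2 l1] .
  moreover have "\<gamma> p s0 \<in> U_nbhd \<Omega> \<phi> \<delta>"
  proof -
    have "(p, s0) \<in> \<Gamma> \<times> I" using pr(1) s0I by simp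
    then have "(\<lambda>(p, s). \<gamma> p s) (p, s0) \<in> (\<lambda>(p, s). \<gamma> p s) ` (\<Gamma> \<times> I)" by (rule imageI)
    then show ?thesis using bij_betw_imp_surj_on[OF bij] unfolding I_def by simp
  qed
  ultimately show ?thesis unfolding U_nbhd_def by auto
qed




lemma simplex_facts:
  fixes T :: "'a::euclidean_space set"
  assumes "int DIM('a) simplex T"
  shows "convex T" "compact T" "diameter T > 0"
proof -
  obtain C where C: "finite C" "\<not> affine_dependent C" "int (card C) = int DIM('a) + 1" "T = convex hull C"
    using assms unfolding simplex by blast
  show "convex T" using C by simp
  show cT: "compact T" using C by (simp add: compact_convex_hull finite_imp_compact)
  have "card C \<ge> 2" using C(3) DIM_positive[where 'a='a] by linarith
  then have "C \<noteq> {}" by auto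
  then obtain a where a: "a \<in> C" by blast
  have "C - {a} \<noteq> {}"
  proof
    assume "C - {a} = {}"
    then have "C \<subseteq> {a}" by blast
    then have "card C \<le> card {a}" by (intro card_mono) auto
    then show False using \<open>card C \<ge> 2\<close> by simp
  qed
  then obtain b where b: "b \<in> C - {a}" by blast
  then have ab: "a \<in> C" "b \<in> C" "a \<noteq> b" using a by auto
  have "C \<subseteq> T" unfolding C(4) by (rule hull_subset)
  then have "a \<in> T" "b \<in> T" using ab by auto
  then have "dist a b \<le> diameter T" using diameter_bounded_bound[OF compact_imp_bounded[OF cT]] by blast
  moreover have "0 < dist a b" using ab(3) by simp
  ultimately show "diameter T > 0" by linarith
qed

theorem mainTheorem1:
  fixes \<Gamma> \<Omega> :: "'a::euclidean_space set"
    and \<phi> :: "'a \<Rightarrow> real"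
    and A :: "'a \<Rightarrow> 'a \<Rightarrow> 'a"
    and c0 c1 \<delta> :: real
    and q L :: nat and \<omega> :: "nat \<Rightarrow> real" and bh :: "nat \<Rightarrow> 'a"
  assumes dim: "DIM('a) = 2 \<or> DIM('a) = 3"
    and \<Omega>_open: "open \<Omega>" and \<Omega>_bdd: "bounded \<Omega>"
    and \<phi>_smooth: "\<exists>S. closure \<Omega> \<subseteq> S \<and> smooth_on S \<phi>"
    and \<Gamma>_def: "\<Gamma> = {x\<in>\<Omega>. \<phi> x = 0}"
    and \<Gamma>_compact: "compact \<Gamma>" and \<Gamma>_connected: "connected \<Gamma>" and \<Gamma>_ne: "\<Gamma> \<noteq> {}"
    and c01: "0 < c0" "c0 \<le> c1"
    and grad_bounds: "\<forall>x\<in>closure \<Omega>. c0 \<le> norm (grad \<phi> x) \<and> norm (grad \<phi> x) \<le> c1"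
    and A_lin: "\<forall>p\<in>\<Gamma>. linear (A p)"
    and A_sym: "\<forall>p\<in>\<Gamma>. \<forall>x y. A p x \<bullet> y = x \<bullet> A p y"
    and A_pd: "\<forall>p\<in>\<Gamma>. \<forall>x. x \<noteq> 0 \<longrightarrow> A p x \<bullet> x > 0"
    and A_cont: "continuous_on \<Gamma> (\<lambda>p. A p)"
    and \<delta>_pos: "0 < \<delta>"
    and flow: "\<exists>\<gamma> :: 'a \<Rightarrow> real \<Rightarrow> 'a.
        (\<forall>p\<in>\<Gamma>. \<gamma> p 0 = p \<and>
          (\<forall>s\<in>{-\<delta><..<\<delta>}. \<gamma> p s \<in> closure \<Omega> \<and>
             (\<gamma> p has_vector_derivative
                (A p (grad \<phi> (\<gamma> p s)) /\<^sub>R (A p (grad \<phi> (\<gamma> p s)) \<bullet> grad \<phi> (\<gamma> p s)))) (at s)) \<and>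
          (\<forall>\<eta> :: real \<Rightarrow> 'a. \<eta> 0 = p \<and>
             (\<forall>s\<in>{-\<delta><..<\<delta>}. \<eta> s \<in> closure \<Omega> \<and>
                (\<eta> has_vector_derivative
                   (A p (grad \<phi> (\<eta> s)) /\<^sub>R (A p (grad \<phi> (\<eta> s)) \<bullet> grad \<phi> (\<eta> s)))) (at s))
             \<longrightarrow> (\<forall>s\<in>{-\<delta><..<\<delta>}. \<eta> s = \<gamma> p s))) \<and>
        bij_betw (\<lambda>(p, s). \<gamma> p s) (\<Gamma> \<times> {-\<delta><..<\<delta>}) (U_nbhd \<Omega> \<phi> \<delta>)"
    and quad: "quadrature_rule q L \<omega> bh"
  shows "\<exists>C::real. \<forall>(\<T> :: 'a set set) (\<Phi> :: 'a set \<Rightarrow> 'a \<Rightarrow> 'a) \<epsilon> \<gamma>.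
     regular_partition \<T> (closure \<Omega>) \<longrightarrow>
     (\<forall>T\<in>\<T>. affine_map (\<Phi> T) \<and> inj_on (\<Phi> T) ref_simplex \<and> \<Phi> T ` ref_simplex = T) \<longrightarrow>
     \<epsilon> = \<gamma> * meshsize \<T> \<longrightarrow> \<gamma> > 1 / r0_of c1 \<longrightarrow> (pi / 2 + c1) * \<epsilon> < \<delta> \<longrightarrow>
     (let h = meshsize \<T>;
          \<epsilon>h = \<epsilon> * arccos (h / \<epsilon>) - c1 * h;
          D = \<Union> (active_elements \<T> \<Phi> L bh \<phi> \<epsilon> h)
      in \<epsilon>h > 0 \<and>
         \<Gamma> \<subseteq> U_nbhd \<Omega> \<phi> \<epsilon>h \<and> U_nbhd \<Omega> \<phi> \<epsilon>h \<subseteq> D \<and>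
         D \<subseteq> U_nbhd \<Omega> \<phi> ((pi / 2 + c1) * \<epsilon>) \<and>
         U_nbhd \<Omega> \<phi> ((pi / 2 + c1) * \<epsilon>) \<subseteq> U_nbhd \<Omega> \<phi> \<delta> \<and>
         (\<forall>x \<in> D - U_nbhd \<Omega> \<phi> \<epsilon>h. sigma_pf q (\<phi> x / \<epsilon>) \<le> C * (h / \<epsilon>) ^ (2 * (q + 1))))"
proof -
  obtain S where S: "closure \<Omega> \<subseteq> S" "smooth_on S \<phi>" using \<phi>_smooth by blast
  obtain gm :: "'a \<Rightarrow> real \<Rightarrow> 'a" where gm:
    "\<forall>p\<in>\<Gamma>. gm p 0 = p \<and>
          (\<forall>s\<in>{-\<delta><..<\<delta>}. gm p s \<in> closure \<Omega> \<and>
             (gm p has_vector_derivative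
                (A p (grad \<phi> (gm p s)) /\<^sub>R (A p (grad \<phi> (gm p s)) \<bullet> grad \<phi> (gm p s)))) (at s))"
    "bij_betw (\<lambda>(p, s). gm p s) (\<Gamma> \<times> {-\<delta><..<\<delta>}) (U_nbhd \<Omega> \<phi> \<delta>)"
    using flow by blast
  have key: "x \<in> \<Omega>" if "x \<in> closure \<Omega>" "\<bar>\<phi> x\<bar> < \<delta>" for x
    by (rule closure_near_Gamma[OF \<Omega>_bdd S \<Gamma>_def \<Gamma>_compact \<Gamma>_ne c01(1) grad_bounds A_lin A_pd A_cont
          gm(1) gm(2) that])
  have c1: "0 < c1" using c01 by linarith
  have r0: "0 < r0_of c1" "r0_of c1 < 1" using r0_props[OF c1] by auto
  have diffK: "\<phi> differentiable (at y)" if "y \<in> closure \<Omega>" for y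
    using smooth_diff[OF S(2)] S(1) that by blast
  obtain L1: "1 \<le> L" and bhT: "\<And>i. i \<in> {1..L} \<Longrightarrow> bh i \<in> ref_simplex"
  proof -
    have "(\<Sum>i=1..L. \<omega> i) = 1" "\<forall>i\<in>{1..L}. bh i \<in> ref_simplex"
      using quad unfolding quadrature_rule_def by auto
    moreover then have "L \<noteq> 0" by (intro notI) simp
    ultimately show ?thesis using that by auto
  qed
  define C where "C = (1 + c1) ^ (2 * (q + 1))"
  show ?thesis
  proof (intro exI[of _ C] allI impI)
    fix \<T> :: "'a set set" and \<Phi> :: "'a set \<Rightarrow> 'a \<Rightarrow> 'a" and \<epsilon> \<gamma> :: real
    assume part: "regular_partition \<T> (closure \<Omega>)"
      and aff: "\<forall>T\<in>\<T>. affine_map (\<Phi> T) \<and> inj_on (\<Phi> T) ref_simplex \<and> \<Phi> T ` ref_simplex = T"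
      and eps: "\<epsilon> = \<gamma> * meshsize \<T>" and gam: "\<gamma> > 1 / r0_of c1"
      and small: "(pi / 2 + c1) * \<epsilon> < \<delta>"
    define h where "h = meshsize \<T>"
    have fin: "finite \<T>" "\<T> \<noteq> {}" and simp: "\<And>T. T \<in> \<T> \<Longrightarrow> int DIM('a) simplex T"
      and cover: "\<Union>\<T> = closure \<Omega>"
      using part unfolding regular_partition_def by auto
    have diam_le: "diameter T \<le> h" if "T \<in> \<T>" for T
      unfolding h_def meshsize_def using fin that by (intro Max_ge) auto
    have hpos: "0 < h"
    proof -
      obtain T where "T \<in> \<T>" using fin by blast
      then show ?thesis using diam_le simplex_facts(3)[OF simp] by (meson less_le_trans)
    qed
    have TK: "T \<subseteq> closure \<Omega>" if "T \<in> \<T>" for T using cover that by blast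
    have phiT: "\<bar>\<phi> x - \<phi> y\<bar> \<le> c1 * h" if T: "T \<in> \<T>" and xy: "x \<in> T" "y \<in> T" for T x y
    proof -
      have "\<bar>\<phi> x - \<phi> y\<bar> \<le> c1 * norm (x - y)"
        using lip_convex[OF simplex_facts(1)[OF simp[OF T]], of \<phi> c1 x y] diffK TK[OF T] grad_bounds xy
        by blast
      also have "norm (x - y) \<le> h"
        using diameter_bounded_bound[OF compact_imp_bounded[OF simplex_facts(2)[OF simp[OF T]]] xy]
          diam_le[OF T] by (simp add: dist_norm)
      then have "c1 * norm (x - y) \<le> c1 * h" using c1 by (intro mult_left_mono) auto
      finally show ?thesis .
    qed
    have bT: "\<Phi> T (bh i) \<in> T" if "T \<in> \<T>" "i \<in> {1..L}" for T i
      using aff bhT that by blast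
    have "1 < 1 / r0_of c1" using r0 by simp
    then have gam1: "\<gamma> > 1" using gam by linarith
    have epos: "\<epsilon> > 0" using eps gam1 hpos unfolding h_def by simp
    define t where "t = h / \<epsilon>"
    have t: "0 < t" "t < r0_of c1" "t < 1" "t \<le> 1"
    proof -
      show "0 < t" unfolding t_def using hpos epos by simp
      have teq: "t = 1 / \<gamma>" unfolding t_def eps h_def using hpos[unfolded h_def] gam1 by simp
      show "t < r0_of c1" unfolding teq using gam r0 gam1 by (simp add: field_simps)
      then show "t < 1" "t \<le> 1" using r0 by auto
    qed
    have hlt: "h < \<epsilon>" using t epos unfolding t_def by (simp add: field_simps)
    have pos: "arccos t - c1 * t > 0" using r0_less[OF c1 t(1) t(2)] .
    define eh where "eh = \<epsilon> * arccos (h / \<epsilon>) - c1 * h"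
    have eh_eq: "eh = \<epsilon> * (arccos t - c1 * t)" unfolding eh_def t_def using epos by (simp add: field_simps)
    have ehpos: "eh > 0" unfolding eh_eq using epos pos by simp
    define D where "D = \<Union> (active_elements \<T> \<Phi> L bh \<phi> \<epsilon> h)"
    have DU: "x \<in> \<Omega> \<and> \<bar>\<phi> x\<bar> < (pi / 2 + c1) * \<epsilon>" if x: "x \<in> D" for x
    proof -
      obtain T where T: "T \<in> \<T>" "x \<in> T" "\<forall>i\<in>{1..L}. \<bar>\<phi> (\<Phi> T (bh i))\<bar> \<le> \<epsilon> * arccos (h / \<epsilon>)"
        using x unfolding D_def active_elements_def by blast
      have "1 \<in> {1..L}" using L1 by simp
      have "\<bar>\<phi> x\<bar> \<le> \<bar>\<phi> (\<Phi> T (bh 1))\<bar> + c1 * h"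
        using phiT[OF T(1) T(2) bT[OF T(1) \<open>1 \<in> {1..L}\<close>]] by linarith
      also have "\<dots> \<le> \<epsilon> * arccos t + c1 * h" using T(3) \<open>1 \<in> {1..L}\<close> unfolding t_def by auto
      also have "\<dots> < \<epsilon> * (pi / 2) + c1 * \<epsilon>"
      proof -
        have "arccos t \<le> pi / 2" using t by (intro arccos_le_pi2) auto
        then have "\<epsilon> * arccos t \<le> \<epsilon> * (pi / 2)" using epos by (intro mult_left_mono) auto
        moreover have "c1 * h < c1 * \<epsilon>" using c1 hlt by simp
        ultimately show ?thesis by linarith
      qed
      finally have lt: "\<bar>\<phi> x\<bar> < (pi / 2 + c1) * \<epsilon>" by (simp add: algebra_simps)
      have "x \<in> \<Omega>" using key[of x] TK[OF T(1)] T(2) lt small by auto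
      then show ?thesis using lt by simp
    qed
    have UD: "U_nbhd \<Omega> \<phi> eh \<subseteq> D"
    proof
      fix x assume "x \<in> U_nbhd \<Omega> \<phi> eh"
      then have x: "x \<in> \<Omega>" "\<bar>\<phi> x\<bar> < eh" unfolding U_nbhd_def by auto
      then obtain T where T: "T \<in> \<T>" "x \<in> T" using cover closure_subset by blast
      have "\<bar>\<phi> (\<Phi> T (bh i))\<bar> \<le> \<epsilon> * arccos (h / \<epsilon>)" if i: "i \<in> {1..L}" for i
        using phiT[OF T(1) bT[OF T(1) i] T(2)] x(2) unfolding eh_def by linarith
      then have "T \<in> active_elements \<T> \<Phi> L bh \<phi> \<epsilon> h"
        unfolding active_elements_def using T by blast
      then show "x \<in> D" unfolding D_def using T by blast
    qed
    have sig: "sigma_pf q (\<phi> x / \<epsilon>) \<le> C * (h / \<epsilon>) ^ (2 * (q + 1))"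
      if x: "x \<in> D - U_nbhd \<Omega> \<phi> eh" for x
    proof -
      have xO: "x \<in> \<Omega>" using DU x by blast
      then have ge: "eh \<le> \<bar>\<phi> x\<bar>" using x unfolding U_nbhd_def by auto
      define u where "u = \<bar>\<phi> x / \<epsilon>\<bar>"
      have u_ge: "arccos t - c1 * t \<le> u"
        using ge epos unfolding u_def eh_eq by (simp add: abs_divide field_simps)
      have "0 \<le> h / \<epsilon>" using t(1) unfolding t_def by simp
      then have Cn: "0 \<le> C * (h / \<epsilon>) ^ (2 * (q + 1))" unfolding C_def using c1
        by (intro mult_nonneg_nonneg zero_le_power) auto
      show ?thesis
      proof (cases "u \<le> pi / 2")
        case False
        then show ?thesis unfolding sigma_pf_def u_def using Cn by simp
      next
        case True
        have cb: "0 \<le> cos u" "cos u \<le> (1 + c1) * t"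
          using cos_bound[OF c1 t(1) t(4) pos u_ge True] by auto
        have "sigma_pf q (\<phi> x / \<epsilon>) = cos u ^ (2 * (q + 1))"
        proof -
          have "cos u = cos (\<phi> x / \<epsilon>)" unfolding u_def by (rule cos_abs_real)
          then show ?thesis using True unfolding sigma_pf_def u_def by simp
        qed
        also have "\<dots> \<le> ((1 + c1) * t) ^ (2 * (q + 1))" using cb by (intro power_mono) auto
        also have "\<dots> = C * (h / \<epsilon>) ^ (2 * (q + 1))" unfolding C_def t_def by (rule power_mult_distrib)
        finally show ?thesis .
      qed
    qed
    show "let h = meshsize \<T>;
          \<epsilon>h = \<epsilon> * arccos (h / \<epsilon>) - c1 * h;
          D = \<Union> (active_elements \<T> \<Phi> L bh \<phi> \<epsilon> h)
      in \<epsilon>h > 0 \<and>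
         \<Gamma> \<subseteq> U_nbhd \<Omega> \<phi> \<epsilon>h \<and> U_nbhd \<Omega> \<phi> \<epsilon>h \<subseteq> D \<and>
         D \<subseteq> U_nbhd \<Omega> \<phi> ((pi / 2 + c1) * \<epsilon>) \<and>
         U_nbhd \<Omega> \<phi> ((pi / 2 + c1) * \<epsilon>) \<subseteq> U_nbhd \<Omega> \<phi> \<delta> \<and>
         (\<forall>x \<in> D - U_nbhd \<Omega> \<phi> \<epsilon>h. sigma_pf q (\<phi> x / \<epsilon>) \<le> C * (h / \<epsilon>) ^ (2 * (q + 1)))"
      unfolding Let_def h_def[symmetric] eh_def[symmetric] D_def[symmetric]
    proof (intro conjI ballI)
      show "eh > 0" by fact
      show "\<Gamma> \<subseteq> U_nbhd \<Omega> \<phi> eh" using ehpos unfolding \<Gamma>_def U_nbhd_def by auto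
      show "U_nbhd \<Omega> \<phi> eh \<subseteq> D" by fact
      show "D \<subseteq> U_nbhd \<Omega> \<phi> ((pi / 2 + c1) * \<epsilon>)" using DU unfolding U_nbhd_def by auto
      show "U_nbhd \<Omega> \<phi> ((pi / 2 + c1) * \<epsilon>) \<subseteq> U_nbhd \<Omega> \<phi> \<delta>" using small unfolding U_nbhd_def by auto
      fix x assume "x \<in> D - U_nbhd \<Omega> \<phi> eh"
      then show "sigma_pf q (\<phi> x / \<epsilon>) \<le> C * (h / \<epsilon>) ^ (2 * (q + 1))" by (rule sig)
    qed
  qed
qed


end
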